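(* Assume Assumption A2 and Assumption A1(p) for some $p\ge1$ (see context), and let $0<\eta_s\le\eta_{\infty,p}$ for all $s$. Then for every $t\ge1$, \[\|\rho^{\mathrm{avg}}_t\|\le\frac{\eta_t^2H_t^2}{2}\zeta_1\zeta_2,\qquad\text{where }\ \rho^{\mathrm{avg}}_t=\frac1N\sum_{c=1}^N\big(I-(I-\eta_t\bar{\mathbf A}^c)^{H_t}\big)(\theta^c_\star-\theta_\star).\]
   Context: Setting: $N$ agents, dimension $d$. For each agent $c$: distribution $\pi_c$ on $(\mathsf Z,\mathcal Z)$, measurable $\mathbf A^c:\mathsf Z\to\mathbb R^{d\times d}$, $\mathbf b^c:\mathsf Z\to\mathbb R^d$, $\bar{\mathbf A}^c=\mathbb E_{\pi_c}[\mathbf A^c(Z)]$, $\bar{\mathbf b}^c=\mathbb E_{\pi_c}[\mathbf b^c(Z)]$, $\bar{\mathbf A}=N^{-1}\sum_c\bar{\mathbf A}^c$; $\theta_\star$ solves $\bar{\mathbf A}\theta_\star=N^{-1}\sum_c\bar{\mathbf b}^c$; $\theta^c_\star$ solves $\bar{\mathbf A}^c\theta^c_\star=\bar{\mathbf b}^c$; $\varepsilon^c(z)=(\mathbf A^c(z)-\bar{\mathbf A}^c)\theta^c_\star-(\mathbf b^c(z)-\bar{\mathbf b}^c)$. Assumption A1(p): each $-\bar{\mathbf A}^c$ Hurwitz; there exist $a>0,\eta_{\infty,p}>0$, $\eta_{\infty,p}a\le1/2$, with $\mathbb E^{1/p}_{Z\sim\pi_c}[\|(I-\eta\mathbf A^c(Z))u\|^p]\le(1-\eta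 a)\|u\|$ for all $0<\eta<\eta_{\infty,p}$, $u$. Assumption A2: samples i.i.d. per agent and independent; $\max_c\sup_z\|\varepsilon^c(z)\|<\infty$, $\max_c\sup_z\max(\|\mathbf A^c(z)\|,\|\mathbf A^c(z)-\bar{\mathbf A}^c\|)<\infty$. $H_t\in\mathbb N$ are the local step numbers. $\zeta_1^2=N^{-1}\sum_c\|\bar{\mathbf A}^c(\theta^c_\star-\theta_\star)\|^2$, $\zeta_2^2=N^{-1}\sum_c\|\bar{\mathbf A}^c-\bar{\mathbf A}\|^2$. *)

theory Defs
  imports "HOL-Probability.Probability"
begin

definition opnorm :: "real^'d^'d \<Rightarrow> real" where
  "opnorm M = onorm (\<lambda>x. M *v x)"

fun matpow :: "real^'d^'d \<Rightarrow> nat \<Rightarrow> real^'d^'d" where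
  "matpow M 0 = mat 1"
| "matpow M (Suc k) = M ** matpow M k"

definition hurwitz :: "real^'d^'d \<Rightarrow> bool" where
  "hurwitz M \<longleftrightarrow>
     (\<forall>(lam::complex) (v::complex^'d). v \<noteq> 0 \<and>
        (\<chi> i j. complex_of_real (M $ i $ j)) *v v = lam *s v \<longrightarrow> Re lam < 0)"

end

theory Submission
  imports Defs
begin

lemma young_aux:
  fixes s p :: real assumes "s \<ge> 0" "p \<ge> 1"
  shows "s \<le> s powr p / p + (1 - 1/p)"
proof (cases "s = 0")
  case True then show ?thesis using assms by (simp add: field_simps)
next
  case False
  hence sp: "s > 0" using assms by simp
  have "(s powr p) powr (1/p) * 1 powr (1 - 1/p) \<le> (1/p) * s powr p + (1 - 1/p) * 1"
    using Youngs_inequality_0[of "1/p" "1 - 1/p" "s powr p" 1] assms sp by auto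
  moreover have "(s powr p) powr (1/p) = s" using assms sp by (simp add: powr_powr)
  ultimately show ?thesis by simp
qed

lemma mat_entry_le_opnorm:
  fixes M :: "real^'d^'d"
  shows "\<bar>M $ i $ j\<bar> \<le> opnorm M"
proof -
  have "M $ i $ j = (M *v axis j 1) $ i"
    by (simp add: matrix_vector_mult_basis column_def)
  also have "\<bar>\<dots>\<bar> \<le> norm (M *v axis j 1)" by (rule component_le_norm_cart)
  also have "\<dots> \<le> opnorm M * norm (axis j (1::real))"
    unfolding opnorm_def by (rule onorm) simp
  finally show ?thesis by simp
qed

lemma norm_le_opnorm:
  fixes M :: "real^'d^'d"
  shows "norm M \<le> real (CARD('d)) * real (CARD('d)) * opnorm M"
proof -
  have "norm M \<le> (\<Sum>i\<in>UNIV. norm (M $ i))"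
    by (simp add: norm_vec_def L2_set_le_sum)
  also have "\<dots> \<le> (\<Sum>i\<in>(UNIV::'d set). (\<Sum>j\<in>(UNIV::'d set). opnorm M))"
  proof (rule sum_mono)
    fix i
    show "norm (M $ i) \<le> (\<Sum>j\<in>(UNIV::'d set). opnorm M)"
      by (rule order_trans[OF norm_le_l1_cart], rule sum_mono, rule mat_entry_le_opnorm)
  qed
  finally show ?thesis by simp
qed

lemma mv_le_opnorm:
  fixes M :: "real^'d^'d"
  shows "norm (M *v x) \<le> opnorm M * norm x"
  unfolding opnorm_def by (rule onorm) simp

lemma lin_mv_left: "bounded_linear (\<lambda>M::real^'d^'d. M *v u)"
proof -
  have "linear (\<lambda>M::real^'d^'d. M *v u)"
    by (rule linearI) (simp_all add: matrix_vector_mult_add_rdistrib scaleR_matrix_vector_assoc)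
  then show ?thesis by (simp add: linear_conv_bounded_linear)
qed

lemma mean_contr:
  fixes M :: "'z measure" and Af :: "'z \<Rightarrow> real^'d^'d" and u :: "real^'d"
  assumes P: "prob_space M" and meas: "Af \<in> borel_measurable M"
    and bdd: "\<forall>z\<in>space M. opnorm (Af z) \<le> B"
    and p: "p \<ge> 1" and R: "R > 0"
    and hyp: "(\<integral>z. norm ((mat 1 - e *\<^sub>R Af z) *v u) powr p \<partial>M) powr (1/p) \<le> R"
  shows "norm ((mat 1 - e *\<^sub>R integral\<^sup>L M Af) *v u) \<le> R"
proof -
  interpret prob_space M by fact
  have B0: "\<forall>z\<in>space M. opnorm (Af z) \<le> max B 0" using bdd by force
  have intA: "integrable M Af"
  proof (rule integrable_const_bound[where B="real CARD('d) * real CARD('d) * max B 0"])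
    show "AE x in M. norm (Af x) \<le> real CARD('d) * real CARD('d) * max B 0"
    proof (rule AE_I2)
      fix x assume "x \<in> space M"
      then show "norm (Af x) \<le> real CARD('d) * real CARD('d) * max B 0"
        using B0 norm_le_opnorm[of "Af x"] by (meson mult_left_mono of_nat_0_le_iff order_trans mult_nonneg_nonneg)
    qed
  qed fact
  define f where "f z = (mat 1 - e *\<^sub>R Af z) *v u" for z
  have f_eq: "f z = u - e *\<^sub>R (Af z *v u)" for z
    unfolding f_def by (simp add: matrix_vector_mult_diff_rdistrib scaleR_matrix_vector_assoc)
  have intAu: "integrable M (\<lambda>z. Af z *v u)"
    using integrable_bounded_linear[OF lin_mv_left intA] .
  have intf: "integrable M f"
  proof -
    have "f = (\<lambda>z. u - e *\<^sub>R (Af z *v u))" using f_eq by auto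
    then show ?thesis using intAu by simp
  qed
  have intf_eq: "integral\<^sup>L M f = (mat 1 - e *\<^sub>R integral\<^sup>L M Af) *v u"
  proof -
    have "integral\<^sup>L M f = u - e *\<^sub>R (\<integral>z. Af z *v u \<partial>M)"
      unfolding f_eq using intAu by (simp add: integral_diff prob_space)
    also have "(\<integral>z. Af z *v u \<partial>M) = integral\<^sup>L M Af *v u"
      using integral_bounded_linear[OF lin_mv_left intA] .
    finally show ?thesis
      by (simp add: matrix_vector_mult_diff_rdistrib scaleR_matrix_vector_assoc)
  qed
  have nf_bd: "norm (f z) \<le> norm u + \<bar>e\<bar> * max B 0 * norm u" if "z \<in> space M" for z
  proof -
    have "norm (f z) \<le> norm u + \<bar>e\<bar> * norm (Af z *v u)"
      unfolding f_eq by (metis norm_scaleR norm_triangle_ineq4 real_norm_def)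
    also have "norm (Af z *v u) \<le> max B 0 * norm u"
      using mv_le_opnorm[of "Af z" u] B0 that by (meson mult_right_mono norm_ge_zero order_trans)
    finally show ?thesis by (simp add: mult_left_mono mult.assoc)
  qed
  have measf: "f \<in> borel_measurable M" using intf by auto
  have intp: "integrable M (\<lambda>z. norm (f z) powr p)"
  proof (rule integrable_const_bound[where B="(norm u + \<bar>e\<bar> * max B 0 * norm u) powr p"])
    show "AE x in M. norm (norm (f x) powr p) \<le> (norm u + \<bar>e\<bar> * max B 0 * norm u) powr p"
      using nf_bd p by (intro AE_I2) (simp add: powr_mono2)
    show "(\<lambda>z. norm (f z) powr p) \<in> borel_measurable M" using measf by measurable
  qed
  define X where "X = (\<integral>z. norm (f z) powr p \<partial>M)"
  have X0: "X \<ge> 0" unfolding X_def by (simp add: integral_nonneg_AE)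
  have XR: "X \<le> R powr p"
  proof -
    have "X = (X powr (1/p)) powr p" using X0 p by (simp add: powr_powr)
    also have "\<dots> \<le> R powr p" using hyp p X0 unfolding X_def f_def
      by (intro powr_mono2) auto
    finally show ?thesis .
  qed
  have "norm ((mat 1 - e *\<^sub>R integral\<^sup>L M Af) *v u) = norm (integral\<^sup>L M f)"
    by (simp add: intf_eq)
  also have "\<dots> \<le> (\<integral>z. norm (f z) \<partial>M)" by (rule integral_norm_bound)
  also have "\<dots> \<le> (\<integral>z. (R / p / R powr p) * norm (f z) powr p + R * (1 - 1/p) \<partial>M)"
  proof (rule integral_mono)
    show "integrable M (\<lambda>z. norm (f z))" using intf by auto
    show "integrable M (\<lambda>z. (R / p / R powr p) * norm (f z) powr p + R * (1 - 1/p))"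
      using intp by auto
    fix z assume "z \<in> space M"
    have "norm (f z) / R \<le> (norm (f z) / R) powr p / p + (1 - 1/p)"
      using young_aux[of "norm (f z) / R" p] p R by simp
    hence "norm (f z) \<le> R * ((norm (f z) / R) powr p / p + (1 - 1/p))"
      using R by (simp add: pos_divide_le_eq mult.commute)
    then show "norm (f z) \<le> (R / p / R powr p) * norm (f z) powr p + R * (1 - 1/p)"
      using R by (simp add: powr_divide field_simps)
  qed
  also have "\<dots> = (R / p / R powr p) * X + R * (1 - 1/p)"
    unfolding X_def using intp by (simp add: prob_space)
  also have "\<dots> \<le> (R / p / R powr p) * R powr p + R * (1 - 1/p)"
    using XR R p by (intro add_right_mono mult_left_mono) auto
  also have "\<dots> = R" using R p by (simp add: field_simps)
  finally show ?thesis .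
qed

lemma limit_contr:
  fixes u w :: "real^'d"
  assumes E: "E > 0" and h: "\<And>e. 0 < e \<Longrightarrow> e < E \<Longrightarrow> norm (u - e *\<^sub>R w) \<le> K"
  shows "norm (u - E *\<^sub>R w) \<le> K"
proof (rule tendsto_upperbound)
  show "((\<lambda>e. norm (u - e *\<^sub>R w)) \<longlongrightarrow> norm (u - E *\<^sub>R w)) (at_left E)"
    by (intro tendsto_intros)
  show "\<forall>\<^sub>F e in at_left E. norm (u - e *\<^sub>R w) \<le> K"
    using eventually_at_left_real[OF E] by eventually_elim (auto intro: h)
  show "\<not> trivial_limit (at_left E)" by simp
qed

lemma mv_sum: "(M::real^'d^'d) *v sum f A = (\<Sum>i\<in>A. M *v f i)"
  by (induction A rule: infinite_finite_induct) (simp_all add: matrix_vector_right_distrib)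

lemma sum_mv: "sum f A *v (x::real^'d) = (\<Sum>i\<in>A. f i *v x)"
  by (induction A rule: infinite_finite_induct) (simp_all add: matrix_vector_mult_add_rdistrib)

lemma matpow_mv_Suc: "matpow P (Suc k) *v x = P *v (matpow P k *v x)"
  by (simp add: matrix_vector_mul_assoc)

lemma pow_contr:
  assumes "\<And>x. norm (P *v x) \<le> norm (x::real^'d)"
  shows "norm (matpow P k *v x) \<le> norm x"
proof (induction k)
  case 0 then show ?case by simp
next
  case (Suc k) then show ?case
    using assms[of "matpow P k *v x"] by (simp add: matpow_mv_Suc matrix_vector_mul_assoc[symmetric])
qed

lemma pow_diff:
  fixes P Q D :: "real^'d^'d"
  assumes cP: "\<And>x. norm (P *v x) \<le> norm x" and cQ: "\<And>x. norm (Q *v x) \<le> norm x"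
    and PQ: "P - Q = e *\<^sub>R D" and e: "e \<ge> 0"
  shows "norm (matpow P k *v x - matpow Q k *v x) \<le> real k * e * opnorm D * norm x"
proof (induction k)
  case 0 then show ?case by simp
next
  case (Suc k)
  have eq: "matpow P (Suc k) *v x - matpow Q (Suc k) *v x
      = P *v (matpow P k *v x - matpow Q k *v x) + e *\<^sub>R (D *v (matpow Q k *v x))"
  proof -
    have "(P - Q) *v (matpow Q k *v x) = e *\<^sub>R (D *v (matpow Q k *v x))"
      using PQ by (simp add: scaleR_matrix_vector_assoc)
    moreover have "P *v a - Q *v b = P *v (a - b) + (P - Q) *v b" for a b :: "real^'d"
      by (simp add: matrix_vector_mult_diff_distrib matrix_vector_mult_diff_rdistrib)
    ultimately show ?thesis
      by (metis matpow_mv_Suc)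
  qed
  have "norm (e *\<^sub>R (D *v (matpow Q k *v x))) \<le> e * (opnorm D * norm x)"
  proof -
    have "norm (D *v (matpow Q k *v x)) \<le> opnorm D * norm (matpow Q k *v x)" by (rule mv_le_opnorm)
    also have "\<dots> \<le> opnorm D * norm x"
      using pow_contr[OF cQ] by (intro mult_left_mono) (auto simp: opnorm_def intro: onorm_pos_le)
    finally show ?thesis using e by (simp add: mult_left_mono)
  qed
  moreover have "norm (P *v (matpow P k *v x - matpow Q k *v x)) \<le> real k * e * opnorm D * norm x"
    using cP Suc.IH order_trans by blast
  ultimately have "norm (matpow P (Suc k) *v x - matpow Q (Suc k) *v x)
     \<le> real k * e * opnorm D * norm x + e * (opnorm D * norm x)"
    unfolding eq by (meson add_mono norm_triangle_ineq order_trans)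
  also have "\<dots> = real (Suc k) * e * opnorm D * norm x" by (simp add: algebra_simps)
  finally show ?case .
qed

lemma geom:
  fixes P :: "real^'d^'d"
  shows "(mat 1 - matpow P H) *v w = (\<Sum>k<H. matpow P k *v ((mat 1 - P) *v w))"
proof (induction H)
  case 0 then show ?case by simp
next
  case (Suc H)
  have "(mat 1 - matpow P (Suc H)) *v w = (mat 1 - P) *v w + P *v ((mat 1 - matpow P H) *v w)"
    by (simp add: matrix_vector_mult_diff_rdistrib matrix_vector_mult_diff_distrib matpow_mv_Suc matrix_vector_mul_assoc[symmetric])
  also have "\<dots> = (\<Sum>k<Suc H. matpow P k *v ((mat 1 - P) *v w))"
    unfolding Suc.IH mv_sum sum.lessThan_Suc_shift by (simp add: matpow_mv_Suc matrix_vector_mul_assoc[symmetric])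
  finally show ?case .
qed

lemma sum_k_le: "(\<Sum>k<H. real k) \<le> (real H)\<^sup>2 / 2"
proof (induction H)
  case 0 then show ?case by simp
next
  case (Suc H) then show ?case by (simp add: power2_eq_square field_simps)
qed

lemma opnorm_neg: "opnorm (- (M::real^'d^'d)) = opnorm M"
proof -
  have "(\<lambda>x. (- M) *v x) = (\<lambda>x. - (M *v x))"
  proof
    fix x
    show "(- M) *v x = - (M *v x)"
      by (simp add: vec_eq_iff matrix_vector_mult_def sum_negf)
  qed
  then show ?thesis unfolding opnorm_def by (simp add: onorm_neg)
qed

lemma mv_form: "(mat 1 - e *\<^sub>R M) *v u = u - e *\<^sub>R ((M::real^'d^'d) *v u)"
  by (simp add: matrix_vector_mult_diff_rdistrib scaleR_matrix_vector_assoc)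

lemma cs_avg:
  fixes x y :: "nat \<Rightarrow> real"
  assumes N: "N > 0"
  shows "(1 / real N) * (\<Sum>c<N. x c * y c)
     \<le> sqrt ((1 / real N) * (\<Sum>c<N. (x c)\<^sup>2)) * sqrt ((1 / real N) * (\<Sum>c<N. (y c)\<^sup>2))"
proof -
  have "(\<Sum>c<N. x c * y c) \<le> sqrt ((\<Sum>c<N. x c * y c)\<^sup>2)" by simp
  also have "\<dots> \<le> sqrt ((\<Sum>c<N. (x c)\<^sup>2) * (\<Sum>c<N. (y c)\<^sup>2))"
    by (rule real_sqrt_le_mono, rule Cauchy_Schwarz_ineq_sum)
  finally have h: "(\<Sum>c<N. x c * y c) \<le> sqrt (\<Sum>c<N. (x c)\<^sup>2) * sqrt (\<Sum>c<N. (y c)\<^sup>2)"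
    by (simp add: real_sqrt_mult)
  have "sqrt ((1 / real N) * (\<Sum>c<N. (x c)\<^sup>2)) * sqrt ((1 / real N) * (\<Sum>c<N. (y c)\<^sup>2))
      = (sqrt (1 / real N) * sqrt (1 / real N)) * (sqrt (\<Sum>c<N. (x c)\<^sup>2) * sqrt (\<Sum>c<N. (y c)\<^sup>2))"
    by (simp only: real_sqrt_mult mult_ac)
  also have "sqrt (1 / real N) * sqrt (1 / real N) = 1 / real N" using N by simp
  finally show ?thesis using h N by (simp add: divide_right_mono)
qed

theorem lemma2:
  fixes N :: nat
    and \<pi> :: "nat \<Rightarrow> 'z measure"
    and A :: "nat \<Rightarrow> 'z \<Rightarrow> real^'d^'d"
    and b :: "nat \<Rightarrow> 'z \<Rightarrow> real^'d"
    and Abar :: "nat \<Rightarrow> real^'d^'d"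
    and bbar :: "nat \<Rightarrow> real^'d"
    and Aavg :: "real^'d^'d"
    and \<theta>s :: "real^'d"
    and \<theta>c :: "nat \<Rightarrow> real^'d"
    and p a \<eta>inf :: real
    and \<eta> :: "nat \<Rightarrow> real"
    and H :: "nat \<Rightarrow> nat"
    and t :: nat
  assumes N_pos: "N \<ge> 1"
    and prob: "\<And>c. c < N \<Longrightarrow> prob_space (\<pi> c)"
    and A_meas: "\<And>c. c < N \<Longrightarrow> A c \<in> borel_measurable (\<pi> c)"
    and b_int: "\<And>c. c < N \<Longrightarrow> integrable (\<pi> c) (b c)"
    and Abar_def: "\<And>c. c < N \<Longrightarrow> Abar c = integral\<^sup>L (\<pi> c) (A c)"
    and bbar_def: "\<And>c. c < N \<Longrightarrow> bbar c = integral\<^sup>L (\<pi> c) (b c)"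
    and Aavg_def: "Aavg = (1 / real N) *\<^sub>R (\<Sum>c<N. Abar c)"
    and \<theta>s_sol: "Aavg *v \<theta>s = (1 / real N) *\<^sub>R (\<Sum>c<N. bbar c)"
    and \<theta>c_sol: "\<And>c. c < N \<Longrightarrow> Abar c *v \<theta>c c = bbar c"
    \<comment> \<open>Assumption A2 (boundedness part)\<close>
    and eps_bdd: "\<exists>B. \<forall>c<N. \<forall>z\<in>space (\<pi> c).
        norm ((A c z - Abar c) *v \<theta>c c - (b c z - bbar c)) \<le> B"
    and A_bdd: "\<exists>B. \<forall>c<N. \<forall>z\<in>space (\<pi> c).
        opnorm (A c z) \<le> B \<and> opnorm (A c z - Abar c) \<le> B"
    \<comment> \<open>Assumption A1(p)\<close>
    and p_ge: "p \<ge> 1"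
    and hurw: "\<And>c. c < N \<Longrightarrow> hurwitz (- Abar c)"
    and a_pos: "a > 0" and \<eta>inf_pos: "\<eta>inf > 0" and \<eta>inf_a: "\<eta>inf * a \<le> 1 / 2"
    and A1: "\<And>c e u. c < N \<Longrightarrow> 0 < e \<Longrightarrow> e < \<eta>inf \<Longrightarrow>
        (\<integral>z. norm ((mat 1 - e *\<^sub>R A c z) *v u) powr p \<partial>(\<pi> c)) powr (1 / p)
          \<le> (1 - e * a) * norm u"
    \<comment> \<open>step sizes\<close>
    and \<eta>_pos: "\<And>s. 0 < \<eta> s" and \<eta>_le: "\<And>s. \<eta> s \<le> \<eta>inf"
    and t_ge: "t \<ge> 1"
  shows "norm ((1 / real N) *\<^sub>R
            (\<Sum>c<N. (mat 1 - matpow (mat 1 - \<eta> t *\<^sub>R Abar c) (H t)) *v (\<theta>c c - \<theta>s)))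
         \<le> (\<eta> t)\<^sup>2 * (real (H t))\<^sup>2 / 2
            * sqrt ((1 / real N) * (\<Sum>c<N. (norm (Abar c *v (\<theta>c c - \<theta>s)))\<^sup>2))
            * sqrt ((1 / real N) * (\<Sum>c<N. (opnorm (Abar c - Aavg))\<^sup>2))"
proof -
  have Npos: "real N > 0" using N_pos by simp
  obtain B where B: "\<forall>c<N. \<forall>z\<in>space (\<pi> c). opnorm (A c z) \<le> B \<and> opnorm (A c z - Abar c) \<le> B"
    using A_bdd by blast
  have contr_open: "norm ((mat 1 - e *\<^sub>R Abar c) *v u) \<le> norm u"
    if c: "c < N" and e: "0 < e" "e < \<eta>inf" for c e u
  proof (cases "u = 0")
    case True then show ?thesis by simp
  next
    case False
    have "e * a < \<eta>inf * a" using e a_pos by simp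
    hence ea: "e * a < 1" using \<eta>inf_a by simp
    have ea0: "e * a > 0" using e a_pos by simp
    have R: "(1 - e * a) * norm u > 0" using ea False by simp
    have "norm ((mat 1 - e *\<^sub>R integral\<^sup>L (\<pi> c) (A c)) *v u) \<le> (1 - e * a) * norm u"
      by (rule mean_contr[OF prob[OF c] A_meas[OF c] _ p_ge R A1[OF c e]])
         (use B c in blast)
    also have "\<dots> \<le> norm u" using mult_nonneg_nonneg[OF less_imp_le[OF ea0] norm_ge_zero[of u]] by (simp add: left_diff_distrib)
    finally show ?thesis using Abar_def[OF c] by simp
  qed
  define e where "e = \<eta> t"
  have e0: "e > 0" unfolding e_def by (rule \<eta>_pos)
  have contrP: "norm ((mat 1 - e *\<^sub>R Abar c) *v u) \<le> norm u" if c: "c < N" for c u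
  proof (cases "e < \<eta>inf")
    case True then show ?thesis using contr_open[OF c e0] by simp
  next
    case False
    hence "e = \<eta>inf" using \<eta>_le[of t] unfolding e_def by simp
    moreover have "norm (u - \<eta>inf *\<^sub>R (Abar c *v u)) \<le> norm u"
      by (rule limit_contr[OF \<eta>inf_pos]) (use contr_open[OF c] in \<open>simp add: mv_form\<close>)
    ultimately show ?thesis by (simp add: mv_form)
  qed
  have contrQ: "norm ((mat 1 - e *\<^sub>R Aavg) *v u) \<le> norm u" for u
  proof -
    have "(mat 1 - e *\<^sub>R Aavg) *v u = (1 / real N) *\<^sub>R (\<Sum>c<N. (mat 1 - e *\<^sub>R Abar c) *v u)"
    proof -
      have "(\<Sum>c<N. (mat 1 - e *\<^sub>R Abar c) *v u) = (\<Sum>c<N. u - e *\<^sub>R (Abar c *v u))"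
        by (simp add: mv_form)
      also have "\<dots> = real N *\<^sub>R u - e *\<^sub>R ((\<Sum>c<N. Abar c) *v u)"
        by (simp add: sum_subtractf scaleR_sum_right sum_mv sum_constant_scaleR del: sum_constant)
      finally have X: "(1 / real N) *\<^sub>R (\<Sum>c<N. (mat 1 - e *\<^sub>R Abar c) *v u)
          = (1 / real N) *\<^sub>R (real N *\<^sub>R u) - (1 / real N) *\<^sub>R (e *\<^sub>R ((\<Sum>c<N. Abar c) *v u))"
        by (simp add: scaleR_diff_right)
      have Y: "(1 / real N) *\<^sub>R (real N *\<^sub>R u) = u" using Npos by simp
      have Z: "(1 / real N) *\<^sub>R (e *\<^sub>R ((\<Sum>c<N. Abar c) *v u))
          = e *\<^sub>R (((1 / real N) *\<^sub>R (\<Sum>c<N. Abar c)) *v u)"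
        by (simp only: scaleR_matrix_vector_assoc[symmetric] scaleR_scaleR mult.commute)
      have "(1 / real N) *\<^sub>R (\<Sum>c<N. (mat 1 - e *\<^sub>R Abar c) *v u)
          = u - e *\<^sub>R (((1 / real N) *\<^sub>R (\<Sum>c<N. Abar c)) *v u)"
        unfolding X Y Z ..
      then show ?thesis by (simp only: mv_form Aavg_def)
    qed
    also have "norm \<dots> \<le> (1 / real N) * (\<Sum>c<N. norm u)"
    proof -
      have "norm (\<Sum>c<N. (mat 1 - e *\<^sub>R Abar c) *v u) \<le> (\<Sum>c<N. norm ((mat 1 - e *\<^sub>R Abar c) *v u))"
        by (rule norm_sum)
      also have "\<dots> \<le> (\<Sum>c<N. norm u)" by (rule sum_mono) (simp add: contrP)
      finally show ?thesis using Npos by (simp add: pos_divide_le_eq mult.commute)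
    qed
    also have "\<dots> = norm u" using Npos by simp
    finally show ?thesis .
  qed
  define h where "h = H t"
  define v where "v c = Abar c *v (\<theta>c c - \<theta>s)" for c
  define P where "P c = mat 1 - e *\<^sub>R Abar c" for c
  define Q where "Q = mat 1 - e *\<^sub>R Aavg"
  define d where "d c = opnorm (Abar c - Aavg)" for c
  have sumv: "(\<Sum>c<N. v c) = 0"
  proof -
    have "(\<Sum>c<N. v c) = (\<Sum>c<N. Abar c *v \<theta>c c) - (\<Sum>c<N. Abar c) *v \<theta>s"
      unfolding v_def by (simp add: matrix_vector_mult_diff_distrib sum_subtractf sum_mv)
    also have "(\<Sum>c<N. Abar c *v \<theta>c c) = (\<Sum>c<N. bbar c)" using \<theta>c_sol by simp
    also have "(\<Sum>c<N. Abar c) = real N *\<^sub>R Aavg" using Npos unfolding Aavg_def by simp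
    also have "(real N *\<^sub>R Aavg) *v \<theta>s = (\<Sum>c<N. bbar c)"
    proof -
      have "(real N *\<^sub>R Aavg) *v \<theta>s = real N *\<^sub>R (Aavg *v \<theta>s)"
        by (rule scaleR_matrix_vector_assoc[symmetric])
      then show ?thesis using Npos by (simp add: \<theta>s_sol)
    qed
    finally show ?thesis by simp
  qed
  have term_eq: "(mat 1 - matpow (P c) h) *v (\<theta>c c - \<theta>s) = e *\<^sub>R (\<Sum>k<h. matpow (P c) k *v v c)" for c
  proof -
    have "mat 1 - P c = e *\<^sub>R Abar c" unfolding P_def by simp
    then show ?thesis unfolding geom v_def
      by (simp add: scaleR_matrix_vector_assoc[symmetric] matrix_vector_mult_scaleR scaleR_sum_right del: scaleR_matrix_vector_assoc)
  qed
  have zeroQ: "(\<Sum>c<N. \<Sum>k<h. matpow Q k *v v c) = 0"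
    by (subst sum.swap) (simp add: mv_sum[symmetric] sumv)
  have Ssplit: "(\<Sum>c<N. (mat 1 - matpow (P c) h) *v (\<theta>c c - \<theta>s))
      = e *\<^sub>R (\<Sum>c<N. \<Sum>k<h. matpow (P c) k *v v c - matpow Q k *v v c)"
    by (simp add: term_eq scaleR_sum_right[symmetric] sum_subtractf zeroQ)
  have PQ: "P c - Q = e *\<^sub>R (Aavg - Abar c)" for c
    unfolding P_def Q_def by (simp add: algebra_simps)
  have dd: "opnorm (Aavg - Abar c) = d c" for c
    unfolding d_def by (metis minus_diff_eq opnorm_neg)
  have bnd: "norm (\<Sum>c<N. \<Sum>k<h. matpow (P c) k *v v c - matpow Q k *v v c)
      \<le> (\<Sum>c<N. \<Sum>k<h. real k * e * d c * norm (v c))"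
  proof -
    have "norm (\<Sum>c<N. \<Sum>k<h. matpow (P c) k *v v c - matpow Q k *v v c)
        \<le> (\<Sum>c<N. norm (\<Sum>k<h. matpow (P c) k *v v c - matpow Q k *v v c))" by (rule norm_sum)
    also have "\<dots> \<le> (\<Sum>c<N. \<Sum>k<h. norm (matpow (P c) k *v v c - matpow Q k *v v c))"
      by (intro sum_mono norm_sum)
    also have "\<dots> \<le> (\<Sum>c<N. \<Sum>k<h. real k * e * d c * norm (v c))"
    proof (intro sum_mono)
      fix c k assume c: "c \<in> {..<N}"
      have cP: "\<And>x. norm (P c *v x) \<le> norm x" unfolding P_def using contrP c by simp
      have cQ: "\<And>x. norm (Q *v x) \<le> norm x" unfolding Q_def using contrQ by simp
      show "norm (matpow (P c) k *v v c - matpow Q k *v v c) \<le> real k * e * d c * norm (v c)"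
        using pow_diff[OF cP cQ PQ[of c]] e0 dd[of c] by simp
    qed
    finally show ?thesis .
  qed
  have "(\<Sum>c<N. \<Sum>k<h. real k * e * d c * norm (v c)) = (\<Sum>k<h. real k) * e * (\<Sum>c<N. norm (v c) * d c)"
    by (simp add: sum_distrib_left sum_distrib_right mult_ac)
  also have "\<dots> \<le> (real h)\<^sup>2 / 2 * e * (\<Sum>c<N. norm (v c) * d c)"
    using sum_k_le[of h] e0 by (intro mult_right_mono) (auto intro: sum_nonneg simp: d_def opnorm_def onorm_pos_le)
  finally have bnd2: "norm (\<Sum>c<N. \<Sum>k<h. matpow (P c) k *v v c - matpow Q k *v v c)
      \<le> (real h)\<^sup>2 / 2 * e * (\<Sum>c<N. norm (v c) * d c)" using bnd by linarith
  have "norm ((1 / real N) *\<^sub>R (\<Sum>c<N. (mat 1 - matpow (P c) h) *v (\<theta>c c - \<theta>s)))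
      = (1 / real N) * e * norm (\<Sum>c<N. \<Sum>k<h. matpow (P c) k *v v c - matpow Q k *v v c)"
    unfolding Ssplit using Npos e0 by simp
  also have "\<dots> \<le> (1 / real N) * e * ((real h)\<^sup>2 / 2 * e * (\<Sum>c<N. norm (v c) * d c))"
    using bnd2 Npos e0 by (intro mult_left_mono) auto
  also have "\<dots> = e\<^sup>2 * (real h)\<^sup>2 / 2 * ((1 / real N) * (\<Sum>c<N. norm (v c) * d c))"
    by (simp add: power2_eq_square mult_ac)
  also have "\<dots> \<le> e\<^sup>2 * (real h)\<^sup>2 / 2 * (sqrt ((1 / real N) * (\<Sum>c<N. (norm (v c))\<^sup>2))
        * sqrt ((1 / real N) * (\<Sum>c<N. (d c)\<^sup>2)))"
    using cs_avg[of N "\<lambda>c. norm (v c)" d] N_pos by (intro mult_left_mono) auto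
  finally show ?thesis unfolding e_def h_def P_def v_def d_def by (simp add: mult.assoc)
qed

end
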